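(* Let $n$ be a positive even integer and let $$R=H^{\otimes n}\left(\sum_{x\in\{0,1\}^n}(-1)^{\sum_{i=1}^{n-1}x_ix_{i+1}}|x\rangle\langle x|\right)H^{\otimes n},$$ a $2^n\times 2^n$ real matrix indexed by $\{0,1\}^n$. Then every matrix element of $R$ satisfies $|\langle y|R|z\rangle|=2^{-n/2}$ for all $y,z\in\{0,1\}^n$, and in every row of $R$ there are exactly $\frac12(2^n+2^{n/2})$ positive entries and $\frac12(2^n-2^{n/2})$ negative entries.
   Context: $H=\frac{1}{\sqrt2}\begin{pmatrix}1&1\\1&-1\end{pmatrix}$ is the Hadamard matrix, $H^{\otimes n}$ its $n$-fold tensor power, and $\{|x\rangle : x\in\{0,1\}^n\}$ is the computational basis of $(\mathbb{C}^2)^{\otimes n}$, with $x=x_1x_2\ldots x_n$. *)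

theory Defs
  imports Complex_Main
begin

text \<open>Computational basis states of n qubits: bit strings x = x_1 ... x_n,
  represented as boolean lists of length n (list index i corresponds to x_(i+1)).
  Operators on (C^2)^{tensor n} are represented by their matrix elements
  (y, z) \<mapsto> <y|A|z> for bit strings y, z.\<close>

definition bitstrings :: "nat \<Rightarrow> bool list set" where
  "bitstrings n = {x. length x = n}"

definition bitnat :: "bool \<Rightarrow> nat" where
  "bitnat b = (if b then 1 else 0)"

definition hadamard :: "bool \<Rightarrow> bool \<Rightarrow> real" where
  "hadamard a b = (-1) ^ (bitnat a * bitnat b) / sqrt 2"

definition hadamard_tensor :: "nat \<Rightarrow> bool list \<Rightarrow> bool list \<Rightarrow> real" where
  "hadamard_tensor n y x = (\<Prod>i<n. hadamard (y ! i) (x ! i))"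

definition op_mult :: "nat \<Rightarrow> (bool list \<Rightarrow> bool list \<Rightarrow> real) \<Rightarrow> (bool list \<Rightarrow> bool list \<Rightarrow> real)
    \<Rightarrow> bool list \<Rightarrow> bool list \<Rightarrow> real" where
  "op_mult n A B y z = (\<Sum>x\<in>bitstrings n. A y x * B x z)"

definition phase_diag :: "nat \<Rightarrow> bool list \<Rightarrow> bool list \<Rightarrow> real" where
  "phase_diag n x x' = (if x = x' then
      (-1) ^ (\<Sum>i\<in>{1..n-1}. bitnat (x ! (i - 1)) * bitnat (x ! i)) else 0)"

definition R_op :: "nat \<Rightarrow> bool list \<Rightarrow> bool list \<Rightarrow> real" where
  "R_op n = op_mult n (op_mult n (hadamard_tensor n) (phase_diag n)) (hadamard_tensor n)"

end

theory Submission
  imports Defs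
begin

definition sg :: "bool \<Rightarrow> real" where "sg b = (if b then -1 else 1)"
lemma sg_simps[simp]: "sg True = -1" "sg False = 1" by (simp_all add: sg_def)
lemma sg_not[simp]: "sg (\<not> p) = - sg p" by (cases p; simp)
lemma sg_xor: "sg (p \<noteq> q) = sg p * sg q" by (cases p; cases q; simp)

fun Qs :: "bool list \<Rightarrow> real" where
  "Qs (a#b#r) = sg (a\<and>b) * Qs (b#r)" | "Qs _ = 1"
fun Ds :: "bool list \<Rightarrow> bool list \<Rightarrow> real" where
  "Ds (a#w) (b#x) = sg (a\<and>b) * Ds w x" | "Ds _ _ = 1"
fun fh :: "bool \<Rightarrow> bool list \<Rightarrow> bool list" where
  "fh a [] = []" | "fh a (c#w) = (c\<noteq>a)#w"
fun xl :: "bool list \<Rightarrow> bool list \<Rightarrow> bool list" where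
  "xl (a#y) (b#z) = (a\<noteq>b) # xl y z" | "xl _ _ = []"

lemma length_fh[simp]: "length (fh a w) = length w" by (cases w) auto
lemma fh_fh[simp]: "fh a (fh a w) = w" by (cases w) auto
lemma length_xl[simp]: "length (xl y z) = min (length y) (length z)"
  by (induction y z rule: xl.induct) auto
lemma xl_xl: "length y = length z \<Longrightarrow> xl y (xl y z) = z"
  by (induction y z rule: xl.induct) auto

fun Ps :: "bool list \<Rightarrow> bool" where
  "Ps (a#b#w) = ((a\<and>b) \<noteq> Ps (fh a w))" | "Ps _ = False"

lemma bs_simp[simp]: "x \<in> bitstrings n \<longleftrightarrow> length x = n" by (simp add: bitstrings_def)
lemma finite_bs[simp]: "finite (bitstrings n)"
proof -
  have "bitstrings n = {xs. set xs \<subseteq> UNIV \<and> length xs = n}" by (auto simp: bitstrings_def)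
  thus ?thesis using finite_lists_length_eq[of "UNIV::bool set" n] by simp
qed
lemma card_bs: "card (bitstrings n) = 2 ^ n"
proof -
  have "bitstrings n = {xs. set xs \<subseteq> UNIV \<and> length xs = n}" by (auto simp: bitstrings_def)
  thus ?thesis using card_lists_length_eq[of "UNIV::bool set" n] by (simp add: card_UNIV_bool)
qed
lemma bs0: "bitstrings 0 = {[]}" by (auto simp: bitstrings_def)

lemma sum_bs_Suc: "(\<Sum>x\<in>bitstrings (Suc n). f x) =
   (\<Sum>x\<in>bitstrings n. f (True#x)) + (\<Sum>x\<in>bitstrings n. f (False#x))"
proof -
  have eq: "bitstrings (Suc n) = Cons True ` bitstrings n \<union> Cons False ` bitstrings n"
    by (auto simp: bitstrings_def length_Suc_conv image_def)
  have "(\<Sum>x\<in>bitstrings (Suc n). f x) = sum f (Cons True ` bitstrings n) + sum f (Cons False ` bitstrings n)"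
    unfolding eq by (rule sum.union_disjoint) auto
  also have "\<dots> = (\<Sum>x\<in>bitstrings n. f (True#x)) + (\<Sum>x\<in>bitstrings n. f (False#x))"
    by (simp add: sum.reindex)
  finally show ?thesis .
qed

lemma sum_reindex_inv:
  assumes "\<And>x. x \<in> A \<Longrightarrow> f x \<in> A" "\<And>x. x \<in> A \<Longrightarrow> f (f x) = x"
  shows "(\<Sum>x\<in>A. g (f x)) = (\<Sum>x\<in>A. (g x :: real))"
proof -
  have "bij_betw f A A" by (rule bij_betw_byWitness[where f'=f]) (use assms in auto)
  thus ?thesis by (rule sum.reindex_bij_betw)
qed

lemma sum_bs_2: "(\<Sum>x\<in>bitstrings (Suc (Suc n)). f x) =
   (\<Sum>v\<in>bitstrings n. f (True#True#v) + f (True#False#v) + f (False#True#v) + f (False#False#v))"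
  by (simp add: sum_bs_Suc sum.distrib add.assoc)

definition S :: "bool list \<Rightarrow> real" where
  "S w = (\<Sum>x\<in>bitstrings (length w). Qs x * Ds w x)"

lemma Qs_Ds_fh: assumes "length v = length w" shows "Qs (a#v) * Ds w v = Qs v * Ds (fh a w) v"
proof (cases v)
  case Nil then show ?thesis using assms by simp
next
  case (Cons d v')
  with assms obtain c w' where w: "w = c#w'" by (cases w) auto
  show ?thesis unfolding Cons w by (cases a; cases c; cases d; simp)
qed

lemma S_rec: "S (a#b#w) = 2 * sg (a\<and>b) * S (fh a w)"
proof -
  let ?m = "length w"
  have "S (a#b#w) = (\<Sum>x\<in>bitstrings (Suc (Suc ?m)). Qs x * Ds (a#b#w) x)"
    unfolding S_def by simp
  also have "\<dots> = (\<Sum>v\<in>bitstrings ?m. 2 * sg (a\<and>b) * (Qs (a#v) * Ds w v))"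
    unfolding sum_bs_2 by (rule sum.cong) (auto, (cases a; cases b; simp))
  also have "\<dots> = (\<Sum>v\<in>bitstrings ?m. 2 * sg (a\<and>b) * (Qs v * Ds (fh a w) v))"
    by (rule sum.cong) (auto simp: Qs_Ds_fh)
  also have "\<dots> = 2 * sg (a\<and>b) * S (fh a w)"
    unfolding S_def by (simp add: sum_distrib_left)
  finally show ?thesis .
qed

lemma S_even: "even (length w) \<Longrightarrow> S w = sg (Ps w) * 2 ^ (length w div 2)"
proof (induction w rule: Ps.induct)
  case (1 a b w)
  then have "S (fh a w) = sg (Ps (fh a w)) * 2 ^ (length w div 2)" by simp
  then show ?case by (cases a; cases b; simp add: S_rec sg_def)
next
  case "2_1" then show ?case by (simp add: S_def bs0)
next
  case ("2_2" v) then show ?case by simp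
qed

lemma D_even: "(\<Sum>w\<in>bitstrings (2*k). sg (Ps w)) = 2 ^ k"
proof (induction k)
  case 0 then show ?case by (simp add: bs0)
next
  case (Suc k)
  have r: "(\<Sum>v\<in>bitstrings (2*k). sg (Ps (fh a v))) = 2 ^ k" for a
    using Suc.IH sum_reindex_inv[of "bitstrings (2*k)" "fh a" "\<lambda>v. sg (Ps v)"] by simp
  have "(\<Sum>w\<in>bitstrings (2*Suc k). sg (Ps w)) = (\<Sum>w\<in>bitstrings (Suc (Suc (2*k))). sg (Ps w))"
    by simp
  also have "\<dots> = (\<Sum>v\<in>bitstrings (2*k). - sg (Ps (fh True v)) + sg (Ps (fh True v))
     + sg (Ps (fh False v)) + sg (Ps (fh False v)))"
    unfolding sum_bs_2 by (simp add: sg_xor)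
  also have "\<dots> = 2 * 2 ^ k"
    by (simp add: sum_distrib_left[symmetric] r)
  finally show ?case by simp
qed

lemma pm1_bit: "(-1::real) ^ (bitnat a * bitnat b) = sg (a \<and> b)"
  by (cases a; cases b; simp add: bitnat_def)

lemma Ds_sym: "Ds y x = Ds x y"
  by (induction y x rule: Ds.induct) (auto simp: conj_commute)

lemma Ds_xl: "length y = length x \<Longrightarrow> length z = length x \<Longrightarrow> Ds y x * Ds z x = Ds (xl y z) x"
proof (induction x arbitrary: y z)
  case Nil then show ?case by simp
next
  case (Cons b x)
  then obtain a y' c z' where "y = a#y'" "z = c#z'" by (cases y; cases z) auto
  with Cons show ?case by (cases a; cases b; cases c; simp; metis mult.assoc mult.left_commute)
qed

lemma had_tensor: "length y = length x \<Longrightarrow>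
   (\<Prod>i<length x. hadamard (y!i) (x!i)) = Ds y x / sqrt 2 ^ length x"
proof (induction x arbitrary: y)
  case Nil then show ?case by simp
next
  case (Cons b x)
  then obtain a y' where y: "y = a#y'" by (cases y) auto
  with Cons have "(\<Prod>i<length x. hadamard (y'!i) (x!i)) = Ds y' x / sqrt 2 ^ length x" by simp
  then show ?case unfolding y length_Cons prod.lessThan_Suc_shift by (simp add: hadamard_def pm1_bit del: prod.lessThan_Suc)
qed


fun qn :: "bool list \<Rightarrow> nat" where
  "qn (a#b#r) = bitnat a * bitnat b + qn (b#r)" | "qn _ = 0"

lemma phase_sum: "(\<Sum>i\<in>{1..length x - 1}. bitnat (x ! (i - 1)) * bitnat (x ! i)) = qn x"
proof (induction x rule: qn.induct)
  case (1 a b r)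
  let ?f = "\<lambda>i. bitnat ((a#b#r) ! (i - 1)) * bitnat ((a#b#r) ! i)"
  have "(\<Sum>i\<in>{1..length (a#b#r) - 1}. ?f i) = sum ?f {Suc 0..Suc (length r)}" by simp
  also have "\<dots> = (\<Sum>i=0..length r. ?f (Suc i))" by (rule sum.shift_bounds_cl_Suc_ivl)
  also have "\<dots> = ?f (Suc 0) + (\<Sum>i=Suc 0..length r. ?f (Suc i))" by (rule sum.atLeast_Suc_atMost) simp
  also have "(\<Sum>i=Suc 0..length r. ?f (Suc i)) = (\<Sum>i\<in>{1..length (b#r) - 1}. bitnat ((b#r) ! (i - 1)) * bitnat ((b#r) ! i))"
    by (rule sum.cong) (auto simp: nth_Cons')
  finally show ?case using 1 by simp
qed auto

lemma phase_Qs: "(-1::real) ^ (\<Sum>i\<in>{1..length x - 1}. bitnat (x ! (i - 1)) * bitnat (x ! i)) = Qs x"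
  unfolding phase_sum by (induction x rule: qn.induct) (auto simp: power_add pm1_bit)

lemma H_eq: "length y = n \<Longrightarrow> length x = n \<Longrightarrow> hadamard_tensor n y x = Ds y x / sqrt 2 ^ n"
  unfolding hadamard_tensor_def using had_tensor[of y x] by simp

lemma R_eq: assumes "length y = n" "length z = n"
  shows "R_op n y z = S (xl y z) / 2 ^ n"
proof -
  have inner: "op_mult n (hadamard_tensor n) (phase_diag n) y x = Ds y x / sqrt 2 ^ n * Qs x"
    if x: "length x = n" for x
  proof -
    have pq: "phase_diag n x x = Qs x" using phase_Qs[of x] x by (simp add: phase_diag_def)
    have "op_mult n (hadamard_tensor n) (phase_diag n) y x =
        (\<Sum>x'\<in>bitstrings n. if x' = x then hadamard_tensor n y x * Qs x else 0)"
      unfolding op_mult_def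
      by (rule sum.cong) (auto simp: pq, simp add: phase_diag_def)
    also have "\<dots> = hadamard_tensor n y x * Qs x" using x by (simp add: sum.delta)
    finally show ?thesis using H_eq assms x by simp
  qed
  have ss: "sqrt 2 ^ n * sqrt 2 ^ n = (2::real) ^ n"
    by (simp add: power_mult_distrib[symmetric])
  have "R_op n y z = (\<Sum>x\<in>bitstrings n. Qs x * Ds (xl y z) x / 2 ^ n)"
    unfolding R_op_def op_mult_def[of n _ "hadamard_tensor n"]
  proof (rule sum.cong)
    fix x assume "x \<in> bitstrings n"
    then have x: "length x = n" by simp
    have "op_mult n (hadamard_tensor n) (phase_diag n) y x * hadamard_tensor n x z
        = Qs x * (Ds y x * Ds z x) / (sqrt 2 ^ n * sqrt 2 ^ n)"
      using inner[OF x] H_eq[OF x assms(2)] Ds_sym[of x z] by simp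
    also have "\<dots> = Qs x * Ds (xl y z) x / 2 ^ n" using Ds_xl[of y x z] assms x ss by simp
    finally show "op_mult n (hadamard_tensor n) (phase_diag n) y x * hadamard_tensor n x z
        = Qs x * Ds (xl y z) x / 2 ^ n" .
  qed simp
  also have "\<dots> = S (xl y z) / 2 ^ n"
    unfolding S_def using assms by (simp add: sum_divide_distrib)
  finally show ?thesis .
qed

lemma card_filter_real: "finite B \<Longrightarrow> real (card {z\<in>B. P z}) = (\<Sum>z\<in>B. if P z then 1 else 0)"
  by (simp add: sum.inter_filter[symmetric])

lemma counts:
  "(\<Sum>w\<in>bitstrings (2*k). if \<not> Ps w then 1 else 0) = ((2::real) ^ (2*k) + 2 ^ k) / 2"
  "(\<Sum>w\<in>bitstrings (2*k). if Ps w then 1 else 0) = ((2::real) ^ (2*k) - 2 ^ k) / 2"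
proof -
  let ?P = "(\<Sum>w\<in>bitstrings (2*k). if \<not> Ps w then 1 else 0::real)"
  let ?N = "(\<Sum>w\<in>bitstrings (2*k). if Ps w then 1 else 0::real)"
  have "?P + ?N = (\<Sum>w\<in>bitstrings (2*k). 1)"
    by (subst sum.distrib[symmetric]) (rule sum.cong, auto)
  also have "\<dots> = 2 ^ (2*k)" by (simp add: card_bs)
  finally have a: "?P + ?N = 2 ^ (2*k)" .
  have "?P - ?N = (\<Sum>w\<in>bitstrings (2*k). sg (Ps w))"
    by (subst sum_subtractf[symmetric]) (rule sum.cong, auto simp: sg_def)
  also have "\<dots> = 2 ^ k" by (rule D_even)
  finally have b: "?P - ?N = 2 ^ k" .
  have h: "(p::real) + q = A \<Longrightarrow> p - q = B \<Longrightarrow> p = (A + B) / 2 \<and> q = (A - B) / 2" for p q A B :: real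
    by auto
  from h[OF a b] show "?P = ((2::real) ^ (2*k) + 2 ^ k) / 2" by blast
  from h[OF a b] show "?N = ((2::real) ^ (2*k) - 2 ^ k) / 2" by blast
qed

theorem mainTheorem2:
  fixes n :: nat
  assumes "n > 0" and "even n"
  shows "(\<forall>y\<in>bitstrings n. \<forall>z\<in>bitstrings n. \<bar>R_op n y z\<bar> = 2 powr (- real n / 2))
       \<and> (\<forall>y\<in>bitstrings n.
            real (card {z\<in>bitstrings n. R_op n y z > 0}) = (2 ^ n + 2 powr (real n / 2)) / 2
          \<and> real (card {z\<in>bitstrings n. R_op n y z < 0}) = (2 ^ n - 2 powr (real n / 2)) / 2)"
proof -
  obtain k where n: "n = 2*k" using assms(2) by blast
  have p1: "2 powr (real n / 2) = 2 ^ k" using n by (simp add: powr_realpow)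
  have p2: "2 powr (- real n / 2) = 1 / 2 ^ k"
  proof -
    have "2 powr (- real n / 2) = 2 powr (- real k)" using n by simp
    also have "\<dots> = 1 / 2 powr real k" by (rule powr_minus_divide)
    also have "\<dots> = 1 / 2 ^ k" by (simp add: powr_realpow)
    finally show ?thesis .
  qed
  have R: "R_op n y z = sg (Ps (xl y z)) / 2 ^ k" if "y \<in> bitstrings n" "z \<in> bitstrings n" for y z
  proof -
    have l: "length (xl y z) = 2*k" using that n by simp
    have "R_op n y z = sg (Ps (xl y z)) * 2 ^ k / 2 ^ (2*k)"
      using R_eq[of y n z] that S_even[of "xl y z"] l n by simp
    also have "\<dots> = sg (Ps (xl y z)) / 2 ^ k" by (simp add: power_add mult_2)
    finally show ?thesis .
  qed
  have reidx: "(\<Sum>z\<in>bitstrings n. g (xl y z)) = (\<Sum>w\<in>bitstrings n. (g w::real))"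
    if "y \<in> bitstrings n" for y g
    by (rule sum_reindex_inv) (use that in \<open>auto simp: xl_xl\<close>)
  show ?thesis
  proof (intro conjI ballI)
    fix y z assume "y \<in> bitstrings n" "z \<in> bitstrings n"
    then show "\<bar>R_op n y z\<bar> = 2 powr (- real n / 2)"
      using R p2 by (simp add: sg_def)
  next
    fix y assume y: "y \<in> bitstrings n"
    have "{z\<in>bitstrings n. R_op n y z > 0} = {z\<in>bitstrings n. \<not> Ps (xl y z)}"
      using R[OF y] by (auto simp: sg_def divide_less_0_iff zero_less_divide_iff split: if_splits)
    then have "real (card {z\<in>bitstrings n. R_op n y z > 0})
        = (\<Sum>z\<in>bitstrings n. (\<lambda>w. if \<not> Ps w then 1 else 0) (xl y z))"
      using card_filter_real[OF finite_bs[of n], of "\<lambda>z. \<not> Ps (xl y z)"] by simp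
    also have "\<dots> = (2 ^ n + 2 powr (real n / 2)) / 2"
      using reidx[OF y, of "\<lambda>w. if \<not> Ps w then 1 else 0"] counts(1)[of k] n p1 by simp
    finally show "real (card {z\<in>bitstrings n. R_op n y z > 0}) = (2 ^ n + 2 powr (real n / 2)) / 2" .
    have "{z\<in>bitstrings n. R_op n y z < 0} = {z\<in>bitstrings n. Ps (xl y z)}"
      using R[OF y] by (auto simp: sg_def divide_less_0_iff zero_less_divide_iff split: if_splits)
    then have "real (card {z\<in>bitstrings n. R_op n y z < 0})
        = (\<Sum>z\<in>bitstrings n. (\<lambda>w. if Ps w then 1 else 0) (xl y z))"
      using card_filter_real[OF finite_bs[of n], of "\<lambda>z. Ps (xl y z)"] by simp
    also have "\<dots> = (2 ^ n - 2 powr (real n / 2)) / 2"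
      using reidx[OF y, of "\<lambda>w. if Ps w then 1 else 0"] counts(2)[of k] n p1 by simp
    finally show "real (card {z\<in>bitstrings n. R_op n y z < 0}) = (2 ^ n - 2 powr (real n / 2)) / 2" .
  qed
qed

end
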